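(* Let $p$ be a prime and $1\le N\le p$. Let $P$ be a box with inputs and outputs in $\mathbb{Z}_p$, and let $\mu_j$ be as defined below. Fix $c\in\mathbb{Z}_p$. In the protocol basicRAC$(p,N,c,P)$ described below, for every $\vec x\in\mathbb{Z}_p^N$ and every $y\in\{0,\dots,N-1\}$, Bob's output $b$ satisfies $$\Pr[b=x_y]=\chi_p(\vec\mu,N-1,c):=\sum_{\substack{(j_1,\dots,j_{N-1})\in\mathbb{Z}_p^{N-1}\\ j_1+\dots+j_{N-1}=-c}}\ \prod_{k=1}^{N-1}\mu_{j_k}=\frac1p\sum_{k=0}^{p-1}\omega_p^{ck}\Big(\sum_{j=0}^{p-1}\mu_j\omega_p^{jk}\Big)^{N-1},$$ where $\omega_p=e^{2\pi i/p}$. For $N=1$ the empty sum condition means $\chi_p=1$ if $c=0$ and $0$ otherwise.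
   Context: Let $p$ be a prime. All arithmetic on elements of $\mathbb{Z}_p$ is modulo $p$. A box is a conditional probability distribution $P(a,b\mid x,y)$ with $a,b,x,y\in\mathbb{Z}_p$. It is shared by Alice, who supplies $x$ and receives $a$, and Bob, who supplies $y$ and receives $b$. Different copies act independently. Define $\mu_j=\frac1{p^2}\sum_{x,y=0}^{p-1}\sum_{k=0}^{p-1}P(a=k,b=k-xy+j\mid x,y)$ for $j\in\mathbb{Z}_p$, and $\vec\mu=(\mu_0,\dots,\mu_{p-1})$. For $N\le p$, define $F_0,\dots,F_{N-1}:\mathbb{Z}_p^N\to\mathbb{Z}_p$ by $$\sum_{i=0}^{N-1}\Big[\prod_{0\le j\ne i\le N-1}(i-j)^{-1}(y-j)\Big]x_i=\sum_{k=0}^{N-1}y^kF_k(\vec x)$$ as polynomials in $y$. With this definition, $x_y=\sum_k y^kF_k(\vec x)$ for $y\in\{0,\dots,N-1\}$. Protocol basicRAC$(p,N,c,P)$. Alice holds $\vec x\in\mathbb{Z}_p^N$ and Bob holds $y\in\{0,\dots,N-1\}$. They use $N-1$ copies of $P$. 1. Each copy $k=1,\dots,N-1$ is depolarized as follows. With fresh independent uniform shared $\alpha,\beta,\gamma\in\mathbb{Z}_p$, the parties feed inputs $u+\alpha$ (Alice) and $v+\beta$ (Bob) to the copy of $P$ when their intended inputs are $u,v$. On receiving $a',b'$, they use $a'-\beta u-\alpha\beta+\gamma$ and $b'+\alpha v+\gamma$ as their outputs. 2. For copy $k$, Alice's intended input is $F_k(\vec x)$ and Bob's is $y^k$. The resulting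 outputs are $a_k$ and $b_k$. 3. Alice sends $q=\sum_{k=1}^{N-1}a_k+F_0(\vec x)$ to Bob. 4. Bob outputs $b=q-\sum_{k=1}^{N-1}b_k-c$. *)

theory Defs
  imports Complex_Main "HOL-Computational_Algebra.Computational_Algebra"
begin

text \<open>Elements of Z_p are represented by integers in {0..<p}; all arithmetic is reduced mod p.\<close>

definition zp :: "int \<Rightarrow> int set" where
  "zp p = {0..<p}"

text \<open>Inverse in Z_p (for p prime and a not divisible by p), via Fermat: a^(p-2) mod p.\<close>
definition zinv :: "int \<Rightarrow> int \<Rightarrow> int" where
  "zinv p a = (a ^ nat (p - 2)) mod p"

definition lagrange_poly :: "int \<Rightarrow> nat \<Rightarrow> nat \<Rightarrow> int poly" where
  "lagrange_poly p N i =
     (\<Prod>j\<in>{0..<N} - {i}. smult (zinv p (int i - int j)) [:- int j, 1:])"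

definition Fcoef :: "int \<Rightarrow> nat \<Rightarrow> (nat \<Rightarrow> int) \<Rightarrow> nat \<Rightarrow> int" where
  "Fcoef p N x k = coeff (\<Sum>i<N. smult (x i) (lagrange_poly p N i)) k mod p"

text \<open>A box: P a b x y = P(a,b | x,y), a conditional probability distribution on Z_p.\<close>
definition is_box :: "int \<Rightarrow> (int \<Rightarrow> int \<Rightarrow> int \<Rightarrow> int \<Rightarrow> real) \<Rightarrow> bool" where
  "is_box p P \<longleftrightarrow>
     (\<forall>a\<in>zp p. \<forall>b\<in>zp p. \<forall>x\<in>zp p. \<forall>y\<in>zp p. 0 \<le> P a b x y) \<and>
     (\<forall>x\<in>zp p. \<forall>y\<in>zp p. (\<Sum>a\<in>zp p. \<Sum>b\<in>zp p. P a b x y) = 1)"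

definition mu :: "int \<Rightarrow> (int \<Rightarrow> int \<Rightarrow> int \<Rightarrow> int \<Rightarrow> real) \<Rightarrow> int \<Rightarrow> real" where
  "mu p P j = 1 / (real_of_int p)^2 *
     (\<Sum>x\<in>zp p. \<Sum>y\<in>zp p. \<Sum>k\<in>zp p. P k ((k - x * y + j) mod p) x y)"

text \<open>Bob's output in basicRAC(p,N,c,P), as a function of the shared randomness
  al, be, ga (indexed by copies k = 1..N-1) and the raw box outputs a', b'.\<close>
definition bob_output ::
  "int \<Rightarrow> nat \<Rightarrow> int \<Rightarrow> (nat \<Rightarrow> int) \<Rightarrow> nat \<Rightarrow>
   (nat \<Rightarrow> int) \<Rightarrow> (nat \<Rightarrow> int) \<Rightarrow> (nat \<Rightarrow> int) \<Rightarrow> (nat \<Rightarrow> int) \<Rightarrow> (nat \<Rightarrow> int) \<Rightarrow> int" where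
  "bob_output p N c x y al be ga a' b' =
    (let u = (\<lambda>k. Fcoef p N x k);
         v = (\<lambda>k. (int y) ^ k mod p);
         a = (\<lambda>k. (a' k - be k * u k - al k * be k + ga k) mod p);
         b = (\<lambda>k. (b' k + al k * v k + ga k) mod p);
         q = ((\<Sum>k\<in>{1..<N}. a k) + Fcoef p N x 0) mod p
     in (q - (\<Sum>k\<in>{1..<N}. b k) - c) mod p)"

text \<open>Probability that Bob's output equals x_y: average over uniform independent
  al_k, be_k, ga_k and over the independent box outputs of the N-1 copies.\<close>
definition success_prob ::
  "int \<Rightarrow> nat \<Rightarrow> int \<Rightarrow> (int \<Rightarrow> int \<Rightarrow> int \<Rightarrow> int \<Rightarrow> real) \<Rightarrow> (nat \<Rightarrow> int) \<Rightarrow> nat \<Rightarrow> real" where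
  "success_prob p N c P x y =
    (let R = PiE {1..<N} (\<lambda>_. zp p);
         u = (\<lambda>k. Fcoef p N x k);
         v = (\<lambda>k. (int y) ^ k mod p)
     in (\<Sum>al\<in>R. \<Sum>be\<in>R. \<Sum>ga\<in>R. \<Sum>a'\<in>R. \<Sum>b'\<in>R.
          (1 / (real_of_int p) ^ 3) ^ (N - 1) *
          (\<Prod>k\<in>{1..<N}. P (a' k) (b' k) ((u k + al k) mod p) ((v k + be k) mod p)) *
          (if bob_output p N c x y al be ga a' b' = x y then 1 else 0)))"

definition chi :: "int \<Rightarrow> (int \<Rightarrow> real) \<Rightarrow> nat \<Rightarrow> int \<Rightarrow> real" where
  "chi p m n c =
     (\<Sum>j\<in>{j\<in>PiE {1..n} (\<lambda>_. zp p). (\<Sum>k\<in>{1..n}. j k) mod p = (- c) mod p}.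
        \<Prod>k\<in>{1..n}. m (j k))"

definition omega :: "int \<Rightarrow> complex" where
  "omega p = exp (2 * pi * \<i> / of_int p)"

end

theory Submission
  imports Defs "HOL-Number_Theory.Number_Theory" "HOL-Analysis.Analysis"
begin


lemma omega_pow:
  assumes "p > 0"
  shows "omega p ^ m = exp(2 * of_real pi * \<i> * of_nat m / of_nat (nat p))"
proof -
  have "omega p ^ m = exp (of_nat m * (2 * pi * \<i> / of_int p))"
    unfolding omega_def by (simp only: exp_of_nat_mult)
  also have "\<dots> = exp(2 * of_real pi * \<i> * of_nat m / of_nat (nat p))"
    using assms by (simp add: field_simps)
  finally show ?thesis .
qed

lemma omega_pow_eq_1:
  assumes "p > 0"
  shows "omega p ^ m = 1 \<longleftrightarrow> p dvd int m"
  using complex_root_unity_eq_1[of "nat p" m] assms omega_pow[OF assms, of m]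
  by (metis int_dvd_int_iff nat_0_less_mult_iff nat_int nat_less_eq_zless nat_one_as_int
      not_less_iff_gr_or_eq of_nat_0_less_iff zero_less_one zero_less_nat_eq linorder_not_le
      pos_int_cases One_nat_def Suc_leI)

lemma omega_sum:
  assumes "p > 0"
  shows "(\<Sum>k\<in>zp p. omega p ^ (nat k * M)) = (if p dvd int M then of_int p else 0)"
proof -
  let ?z = "omega p ^ M"
  have "(\<Sum>k\<in>zp p. omega p ^ (nat k * M)) = (\<Sum>k\<in>zp p. ?z ^ nat k)"
    by (simp add: power_mult mult.commute)
  also have "\<dots> = (\<Sum>k<nat p. ?z ^ k)"
  proof -
    have "bij_betw nat (zp p) {..<nat p}"
      unfolding zp_def bij_betw_def inj_on_def
      apply (auto simp: image_iff)
      apply (rule_tac x="int x" in bexI) by auto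
    thus ?thesis by (rule sum.reindex_bij_betw)
  qed
  also have "\<dots> = (if p dvd int M then of_int p else 0)"
  proof (cases "p dvd int M")
    case True
    hence "?z = 1" using omega_pow_eq_1[OF assms] by simp
    thus ?thesis using True assms by simp
  next
    case False
    hence "?z \<noteq> 1" using omega_pow_eq_1[OF assms] by simp
    moreover have "?z ^ nat p = 1"
      using omega_pow_eq_1[OF assms, of "M * nat p"] assms by (simp add: power_mult[symmetric])
    ultimately show ?thesis using False by (simp add: sum_gp_strict)
  qed
  finally show ?thesis .
qed

lemma chi_fourier:
  fixes m :: "int \<Rightarrow> real"
  assumes p: "p > 0" and c: "c \<in> zp p"
  shows "complex_of_real (chi p m n c) =
           1 / of_int p * (\<Sum>k\<in>zp p. omega p ^ nat (c * k) *
              (\<Sum>j\<in>zp p. complex_of_real (m j) * omega p ^ nat (j * k)) ^ n)"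
proof -
  let ?A = "{1..n}"
  let ?R = "PiE ?A (\<lambda>_. zp p)"
  have fin: "finite (zp p)" by (simp add: zp_def)
  have finR: "finite ?R" using fin by (simp add: finite_PiE)
  define S where "S J = (\<Sum>i\<in>?A. nat (J i))" for J :: "nat \<Rightarrow> int"
  have c0: "c \<ge> 0" using c by (simp add: zp_def)
  have key: "omega p ^ nat (c * k) *
              (\<Sum>j\<in>zp p. complex_of_real (m j) * omega p ^ nat (j * k)) ^ n
           = (\<Sum>J\<in>?R. complex_of_real (\<Prod>i\<in>?A. m (J i)) * omega p ^ (nat k * (nat c + S J)))"
    if k: "k \<in> zp p" for k
  proof -
    have k0: "k \<ge> 0" using k by (simp add: zp_def)
    have "(\<Sum>j\<in>zp p. complex_of_real (m j) * omega p ^ nat (j * k)) ^ n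
        = (\<Prod>i\<in>?A. \<Sum>j\<in>zp p. complex_of_real (m j) * omega p ^ nat (j * k))"
      by simp
    also have "\<dots> = (\<Sum>J\<in>?R. \<Prod>i\<in>?A. complex_of_real (m (J i)) * omega p ^ nat (J i * k))"
      by (rule prod_sum_PiE) (auto simp: fin)
    also have "\<dots> = (\<Sum>J\<in>?R. complex_of_real (\<Prod>i\<in>?A. m (J i)) * omega p ^ (nat k * S J))"
    proof (rule sum.cong[OF refl])
      fix J assume J: "J \<in> ?R"
      have "(\<Prod>i\<in>?A. complex_of_real (m (J i)) * omega p ^ nat (J i * k))
          = (\<Prod>i\<in>?A. complex_of_real (m (J i))) * (\<Prod>i\<in>?A. omega p ^ (nat k * nat (J i)))"
      proof -
        have "\<And>i. i \<in> ?A \<Longrightarrow> nat (J i * k) = nat k * nat (J i)"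
          using J k0 by (auto simp: zp_def PiE_iff nat_mult_distrib)
        thus ?thesis by (simp add: prod.distrib)
      qed
      also have "(\<Prod>i\<in>?A. omega p ^ (nat k * nat (J i))) = omega p ^ (nat k * S J)"
        by (simp add: S_def power_sum sum_distrib_left)
      finally show "(\<Prod>i\<in>?A. complex_of_real (m (J i)) * omega p ^ nat (J i * k)) =
          complex_of_real (\<Prod>i\<in>?A. m (J i)) * omega p ^ (nat k * S J)" by simp
    qed
    finally have "(\<Sum>j\<in>zp p. complex_of_real (m j) * omega p ^ nat (j * k)) ^ n
       = (\<Sum>J\<in>?R. complex_of_real (\<Prod>i\<in>?A. m (J i)) * omega p ^ (nat k * S J))" .
    moreover have "nat (c * k) = nat k * nat c" using c0 k0 by (simp add: nat_mult_distrib)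
    ultimately show ?thesis
      by (simp add: sum_distrib_left power_add algebra_simps)
  qed
  have "1 / of_int p * (\<Sum>k\<in>zp p. omega p ^ nat (c * k) *
              (\<Sum>j\<in>zp p. complex_of_real (m j) * omega p ^ nat (j * k)) ^ n)
      = 1 / of_int p * (\<Sum>k\<in>zp p. \<Sum>J\<in>?R. complex_of_real (\<Prod>i\<in>?A. m (J i)) * omega p ^ (nat k * (nat c + S J)))"
    using key by simp
  also have "\<dots> = 1 / of_int p * (\<Sum>J\<in>?R. complex_of_real (\<Prod>i\<in>?A. m (J i)) * (\<Sum>k\<in>zp p. omega p ^ (nat k * (nat c + S J))))"
    by (simp add: sum.swap[of _ "zp p"] sum_distrib_left)
  also have "\<dots> = (\<Sum>J\<in>?R. complex_of_real (if p dvd int (nat c + S J) then (\<Prod>i\<in>?A. m (J i)) else 0))"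
  proof -
    have "\<And>J. complex_of_real (\<Prod>i\<in>?A. m (J i)) * (\<Sum>k\<in>zp p. omega p ^ (nat k * (nat c + S J)))
       = of_int p * complex_of_real (if p dvd int (nat c + S J) then (\<Prod>i\<in>?A. m (J i)) else 0)"
      by (simp only: omega_sum[OF p]) simp
    thus ?thesis using p by (simp add: sum_distrib_left[symmetric])
  qed
  also have "\<dots> = complex_of_real (\<Sum>J\<in>?R. if p dvd int (nat c + S J) then (\<Prod>i\<in>?A. m (J i)) else 0)"
    by simp
  also have "(\<Sum>J\<in>?R. if p dvd int (nat c + S J) then (\<Prod>i\<in>?A. m (J i)) else 0)
     = (\<Sum>J\<in>?R. if (\<Sum>k\<in>?A. J k) mod p = (- c) mod p then (\<Prod>i\<in>?A. m (J i)) else 0)"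
  proof (rule sum.cong[OF refl])
    fix J assume J: "J \<in> ?R"
    have "int (S J) = (\<Sum>k\<in>?A. J k)"
      unfolding S_def using J by (auto simp: zp_def PiE_iff intro!: sum.cong)
    hence "int (nat c + S J) = c + (\<Sum>k\<in>?A. J k)" using c0 by simp
    hence "p dvd int (nat c + S J) \<longleftrightarrow> (\<Sum>k\<in>?A. J k) mod p = (- c) mod p"
      by (simp add: mod_eq_dvd_iff add.commute)
    thus "(if p dvd int (nat c + S J) then (\<Prod>i\<in>?A. m (J i)) else 0) =
          (if (\<Sum>k\<in>?A. J k) mod p = (- c) mod p then (\<Prod>i\<in>?A. m (J i)) else 0)" by simp
  qed
  also have "\<dots> = chi p m n c"
    unfolding chi_def by (rule sum.inter_filter[symmetric, OF finR])
  finally show ?thesis by simp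
qed

lemma fermat_int:
  fixes p a :: int
  assumes "prime p" "\<not> p dvd a"
  shows "[a ^ nat (p - 1) = 1] (mod p)"
proof -
  have p0: "p > 1" using assms(1) prime_gt_1_int by blast
  define b where "b = nat (a mod p)"
  have bi: "int b = a mod p" using p0 by (simp add: b_def)
  have pn: "prime (nat p)" using assms(1) p0
    by (metis int_nat_eq prime_nat_int_transfer zero_le_one order.strict_implies_order order_le_less_trans)
  have "\<not> nat p dvd b"
  proof
    assume "nat p dvd b"
    hence "int (nat p) dvd int b" by (simp only: int_dvd_int_iff)
    hence "p dvd a mod p" using p0 bi by simp
    thus False using assms(2) by (simp add: dvd_mod_iff)
  qed
  from fermat_theorem[OF pn this] have "[b ^ (nat p - 1) = 1] (mod nat p)" .
  hence "[int b ^ (nat p - 1) = 1] (mod int (nat p))"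
    by (metis cong_int_iff of_nat_1 of_nat_power)
  hence "[(a mod p) ^ nat (p - 1) = 1] (mod p)" using p0 bi by (simp add: nat_diff_distrib)
  moreover have "[a ^ nat (p - 1) = (a mod p) ^ nat (p - 1)] (mod p)"
    by (simp add: Cong.cong_def power_mod)
  ultimately show ?thesis using cong_trans by blast
qed

lemma zinv_cong:
  fixes p a :: int
  assumes "prime p" "\<not> p dvd a"
  shows "[zinv p a * a = 1] (mod p)"
proof -
  have p0: "p > 1" using assms(1) prime_gt_1_int by blast
  have "[zinv p a * a = a ^ nat (p - 2) * a] (mod p)"
    unfolding zinv_def by (simp add: Cong.cong_def mod_mult_left_eq)
  also have "a ^ nat (p - 2) * a = a ^ nat (p - 1)"
  proof -
    have "nat (p - 1) = Suc (nat (p - 2))" using p0 by simp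
    thus ?thesis by simp
  qed
  also have "[\<dots> = 1] (mod p)" by (rule fermat_int[OF assms])
  finally show ?thesis .
qed

lemma sum_split0:
  fixes f :: "nat \<Rightarrow> 'a::comm_monoid_add"
  assumes "1 \<le> N"
  shows "(\<Sum>k<N. f k) = f 0 + (\<Sum>k\<in>{1..<N}. f k)"
proof -
  have "{..<N} = insert 0 {1..<N}" using assms by auto
  thus ?thesis by simp
qed

lemma degree_lagrange:
  assumes "i < N"
  shows "degree (lagrange_poly p N i) \<le> N - 1"
proof -
  have "degree (lagrange_poly p N i) \<le> (\<Sum>j\<in>{0..<N} - {i}. degree (Polynomial.smult (zinv p (int i - int j)) [:- int j, 1:]))"
    unfolding lagrange_poly_def
    by (rule order_trans[OF degree_prod_sum_le]) (simp_all only: o_def finite_Diff finite_atLeastLessThan order_refl)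
  also have "\<dots> \<le> (\<Sum>j\<in>{0..<N} - {i}. 1)"
  proof (rule sum_mono)
    fix j
    have "degree [:- int j, 1:] = 1" by simp
    thus "degree (Polynomial.smult (zinv p (int i - int j)) [:- int j, 1:]) \<le> 1"
      by (metis degree_smult_le)
  qed
  also have "\<dots> = N - 1" using assms by simp
  finally show ?thesis .
qed

lemma interp:
  fixes p :: int and N :: nat and x :: "nat \<Rightarrow> int" and y :: nat
  assumes pr: "prime p" and N1: "1 \<le> N" and Np: "int N \<le> p" and yN: "y < N"
    and xz: "\<forall>i<N. x i \<in> zp p"
  shows "(Fcoef p N x 0 + (\<Sum>k\<in>{1..<N}. Fcoef p N x k * ((int y)^k mod p))) mod p = x y"
proof -
  have p1: "p > 1" using pr prime_gt_1_int by blast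
  define Q where "Q = (\<Sum>i<N. Polynomial.smult (x i) (lagrange_poly p N i))"
  have degQ: "degree Q \<le> N - 1"
    unfolding Q_def
    apply (rule degree_sum_le) apply simp apply (rule order_trans[OF degree_smult_le])
    apply (rule degree_lagrange) by simp
  have polyQ: "poly Q (int y) = (\<Sum>k<N. Polynomial.coeff Q k * int y ^ k)"
  proof -
    have "poly Q (int y) = (\<Sum>k\<le>degree Q. Polynomial.coeff Q k * int y ^ k)" by (rule poly_altdef)
    also have "\<dots> = (\<Sum>k<N. Polynomial.coeff Q k * int y ^ k)"
      by (rule sum.mono_neutral_left) (use degQ N1 in \<open>auto simp: coeff_eq_0\<close>)
    finally show ?thesis .
  qed
  have Lzero: "poly (lagrange_poly p N i) (int y) = 0" if "i < N" "i \<noteq> y" for i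
    unfolding lagrange_poly_def poly_prod
    by (rule prod_zero) (use that yN in \<open>auto intro!: bexI[where x=y]\<close>)
  have Lone: "[poly (lagrange_poly p N y) (int y) = 1] (mod p)"
  proof -
    have "[poly (lagrange_poly p N y) (int y) = (\<Prod>j\<in>{0..<N} - {y}. 1)] (mod p)"
      unfolding lagrange_poly_def poly_prod
    proof (rule cong_prod)
      fix j assume j: "j \<in> {0..<N} - {y}"
      have nd: "\<not> p dvd (int y - int j)"
      proof
        assume "p dvd (int y - int j)"
        moreover have "int y - int j \<noteq> 0" using j by auto
        ultimately have "\<bar>p\<bar> \<le> \<bar>int y - int j\<bar>" by (rule dvd_imp_le_int[rotated])
        moreover have "\<bar>int y - int j\<bar> < int N" using j yN by auto
        ultimately show False using Np p1 by simp
      qed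
      show "[poly (Polynomial.smult (zinv p (int y - int j)) [:- int j, 1:]) (int y) = 1] (mod p)"
        using zinv_cong[OF pr nd] by (simp add: algebra_simps)
    qed
    thus ?thesis by simp
  qed
  have "poly Q (int y) = (\<Sum>i<N. x i * poly (lagrange_poly p N i) (int y))"
    unfolding Q_def by (simp add: poly_sum)
  also have "\<dots> = (\<Sum>i<N. if i = y then x y * poly (lagrange_poly p N y) (int y) else 0)"
    by (rule sum.cong[OF refl]) (auto simp: Lzero)
  also have "\<dots> = x y * poly (lagrange_poly p N y) (int y)" using yN by simp
  finally have "[poly Q (int y) = x y * 1] (mod p)" using cong_scalar_left[OF Lone, of "x y"] by simp
  hence c1: "[(\<Sum>k<N. Polynomial.coeff Q k * int y ^ k) = x y] (mod p)" using polyQ by simp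
  have "[Fcoef p N x 0 + (\<Sum>k\<in>{1..<N}. Fcoef p N x k * ((int y)^k mod p))
        = (\<Sum>k<N. Polynomial.coeff Q k * int y ^ k)] (mod p)"
  proof -
    have "[Fcoef p N x 0 + (\<Sum>k\<in>{1..<N}. Fcoef p N x k * ((int y)^k mod p))
        = Polynomial.coeff Q 0 * int y ^ 0 + (\<Sum>k\<in>{1..<N}. Polynomial.coeff Q k * int y ^ k)] (mod p)"
      unfolding Fcoef_def Q_def[symmetric]
      by (intro cong_add cong_sum cong_mult) (auto simp: Cong.cong_def)
    thus ?thesis using sum_split0[OF N1, of "\<lambda>k. Polynomial.coeff Q k * int y ^ k"] by simp
  qed
  hence "[Fcoef p N x 0 + (\<Sum>k\<in>{1..<N}. Fcoef p N x k * ((int y)^k mod p)) = x y] (mod p)"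
    using c1 cong_trans by blast
  moreover have "x y mod p = x y" using xz yN by (auto simp: zp_def)
  ultimately show ?thesis by (simp add: Cong.cong_def)
qed

lemma sum4_PiE:
  fixes G :: "'k \<Rightarrow> 'a \<Rightarrow> 'a \<Rightarrow> 'a \<Rightarrow> 'a \<Rightarrow> 'c::comm_semiring_1"
  assumes fI: "finite I" and fZ: "finite Z"
  shows "(\<Sum>al\<in>PiE I (\<lambda>_. Z). \<Sum>be\<in>PiE I (\<lambda>_. Z). \<Sum>a\<in>PiE I (\<lambda>_. Z). \<Sum>b\<in>PiE I (\<lambda>_. Z).
            \<Prod>k\<in>I. G k (al k) (be k) (a k) (b k))
       = (\<Prod>k\<in>I. \<Sum>\<alpha>\<in>Z. \<Sum>\<beta>\<in>Z. \<Sum>s\<in>Z. \<Sum>t\<in>Z. G k \<alpha> \<beta> s t)"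
proof -
  have 1: "\<And>F :: 'k \<Rightarrow> 'a \<Rightarrow> 'c. (\<Prod>k\<in>I. \<Sum>\<alpha>\<in>Z. F k \<alpha>) = (\<Sum>al\<in>PiE I (\<lambda>_. Z). \<Prod>k\<in>I. F k (al k))"
    by (rule prod_sum_PiE) (auto simp: fI fZ)
  show ?thesis by (simp only: 1)
qed

lemma shift_bij:
  fixes p u :: int
  assumes "p > 0"
  shows "bij_betw (\<lambda>\<alpha>. (u + \<alpha>) mod p) (zp p) (zp p)"
proof -
  have "inj_on (\<lambda>\<alpha>. (u + \<alpha>) mod p) (zp p)"
  proof
    fix a b assume a: "a \<in> zp p" and b: "b \<in> zp p" and e: "(u + a) mod p = (u + b) mod p"
    hence "p dvd (u + a - (u + b))" by (simp add: mod_eq_dvd_iff)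
    hence "p dvd (a - b)" by simp
    hence "a mod p = b mod p" by (simp add: mod_eq_dvd_iff)
    thus "a = b" using a b by (simp add: zp_def)
  qed
  moreover have "(\<lambda>\<alpha>. (u + \<alpha>) mod p) ` zp p = zp p"
  proof
    show "(\<lambda>\<alpha>. (u + \<alpha>) mod p) ` zp p \<subseteq> zp p" using assms by (auto simp: zp_def)
    show "zp p \<subseteq> (\<lambda>\<alpha>. (u + \<alpha>) mod p) ` zp p"
    proof
      fix X assume X: "X \<in> zp p"
      have "(X - u) mod p \<in> zp p" using assms by (simp add: zp_def)
      moreover have "(u + (X - u) mod p) mod p = X"
        using X by (simp add: mod_add_right_eq zp_def)
      ultimately show "X \<in> (\<lambda>\<alpha>. (u + \<alpha>) mod p) ` zp p" by (metis image_eqI)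
    qed
  qed
  ultimately show ?thesis by (simp add: bij_betw_def)
qed

lemma sum_shift:
  fixes p u :: int and g :: "int \<Rightarrow> 'c::comm_monoid_add"
  assumes "p > 0"
  shows "(\<Sum>\<alpha>\<in>zp p. g ((u + \<alpha>) mod p)) = (\<Sum>X\<in>zp p. g X)"
  using sum.reindex_bij_betw[OF shift_bij[OF assms, of u], of g] .

lemma coord:
  fixes p u v J :: int and P :: "int \<Rightarrow> int \<Rightarrow> int \<Rightarrow> int \<Rightarrow> real"
  assumes p0: "p > 0" and J: "J \<in> zp p"
  shows "(\<Sum>\<alpha>\<in>zp p. \<Sum>\<beta>\<in>zp p. \<Sum>s\<in>zp p. \<Sum>t\<in>zp p.
            P s t ((u + \<alpha>) mod p) ((v + \<beta>) mod p) *
            (if (t - s + ((u + \<alpha>) mod p) * ((v + \<beta>) mod p)) mod p = J then 1 else 0))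
       = (real_of_int p)^2 * mu p P J"
proof -
  define g where "g X Y = (\<Sum>s\<in>zp p. \<Sum>t\<in>zp p. P s t X Y * (if (t - s + X * Y) mod p = J then 1 else 0))" for X Y
  have "(\<Sum>\<alpha>\<in>zp p. \<Sum>\<beta>\<in>zp p. \<Sum>s\<in>zp p. \<Sum>t\<in>zp p.
            P s t ((u + \<alpha>) mod p) ((v + \<beta>) mod p) *
            (if (t - s + ((u + \<alpha>) mod p) * ((v + \<beta>) mod p)) mod p = J then 1 else 0))
       = (\<Sum>\<alpha>\<in>zp p. \<Sum>\<beta>\<in>zp p. g ((u + \<alpha>) mod p) ((v + \<beta>) mod p))"
    unfolding g_def ..
  also have "\<dots> = (\<Sum>\<alpha>\<in>zp p. \<Sum>Y\<in>zp p. g ((u + \<alpha>) mod p) Y)"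
    by (rule sum.cong[OF refl]) (rule sum_shift[OF p0])
  also have "\<dots> = (\<Sum>X\<in>zp p. \<Sum>Y\<in>zp p. g X Y)"
    by (rule sum_shift[OF p0, of "\<lambda>X. \<Sum>Y\<in>zp p. g X Y"])
  also have "\<dots> = (\<Sum>X\<in>zp p. \<Sum>Y\<in>zp p. \<Sum>s\<in>zp p. P s ((s - X * Y + J) mod p) X Y)"
  proof (intro sum.cong refl)
    fix X Y
    have "g X Y = (\<Sum>s\<in>zp p. \<Sum>t\<in>zp p. if t = (s - X * Y + J) mod p then P s t X Y else 0)"
      unfolding g_def
    proof (intro sum.cong refl)
      fix s t assume t: "t \<in> zp p"
      have "(t - s + X * Y) mod p = J \<longleftrightarrow> (t - s + X * Y) mod p = J mod p"
        using J by (simp add: zp_def)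
      also have "\<dots> \<longleftrightarrow> p dvd (t - (s - X * Y + J))"
        by (simp add: mod_eq_dvd_iff algebra_simps)
      also have "\<dots> \<longleftrightarrow> t mod p = (s - X * Y + J) mod p"
        by (simp add: mod_eq_dvd_iff)
      also have "\<dots> \<longleftrightarrow> t = (s - X * Y + J) mod p"
        using t by (simp add: zp_def)
      finally show "P s t X Y * (if (t - s + X * Y) mod p = J then 1 else 0) =
          (if t = (s - X * Y + J) mod p then P s t X Y else 0)" by simp
    qed
    also have "\<dots> = (\<Sum>s\<in>zp p. P s ((s - X * Y + J) mod p) X Y)"
    proof (rule sum.cong[OF refl])
      fix s
      have "(s - X * Y + J) mod p \<in> zp p" using p0 by (simp add: zp_def)
      moreover have "finite (zp p)" by (simp add: zp_def)
      ultimately show "(\<Sum>t\<in>zp p. if t = (s - X * Y + J) mod p then P s t X Y else 0) =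
            P s ((s - X * Y + J) mod p) X Y"
        by (simp add: sum.delta')
    qed
    finally show "g X Y = (\<Sum>s\<in>zp p. P s ((s - X * Y + J) mod p) X Y)" .
  qed
  also have "\<dots> = (real_of_int p)^2 * mu p P J"
    unfolding mu_def using p0 by simp
  finally show ?thesis .
qed
lemma bob_cond:
  fixes p :: int
  assumes p1: "p > 1"
    and interp: "[Fcoef p N x 0 + (\<Sum>k\<in>{1..<N}. Fcoef p N x k * ((int y)^k mod p)) = x y] (mod p)"
    and xy: "x y \<in> zp p"
  shows "bob_output p N c x y al be ga a' b' = x y \<longleftrightarrow>
     (\<Sum>k\<in>{1..<N}. (b' k - a' k + ((Fcoef p N x k + al k) mod p) * (((int y)^k mod p + be k) mod p)) mod p) mod p
        = (- c) mod p"
proof -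
  define I where "I = {1..<N}"
  define u where "u k = Fcoef p N x k" for k
  define v where "v k = (int y)^k mod p" for k
  define a0 where "a0 k = a' k - be k * u k - al k * be k + ga k" for k
  define b0 where "b0 k = b' k + al k * v k + ga k" for k
  define J0 where "J0 k = b' k - a' k + (u k + al k) * (v k + be k)" for k
  define jj where "jj k = (b' k - a' k + ((u k + al k) mod p) * ((v k + be k) mod p)) mod p" for k
  have bo: "bob_output p N c x y al be ga a' b'
     = (((\<Sum>k\<in>I. a0 k mod p) + u 0) mod p - (\<Sum>k\<in>I. b0 k mod p) - c) mod p"
    unfolding bob_output_def Let_def I_def u_def v_def a0_def b0_def ..
  have c1: "[bob_output p N c x y al be ga a' b' = (\<Sum>k\<in>I. a0 k) + u 0 - (\<Sum>k\<in>I. b0 k) - c] (mod p)"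
    unfolding bo cong_mod_left
    by (intro cong_diff cong_add cong_sum) (auto simp: Cong.cong_def, metis mod_add_left_eq mod_sum_eq)
  have c2: "[(\<Sum>k\<in>I. jj k) = (\<Sum>k\<in>I. J0 k)] (mod p)"
    unfolding jj_def J0_def
  proof (rule cong_sum)
    fix k
    have "(b' k - a' k + ((u k + al k) mod p) * ((v k + be k) mod p)) mod p
       = (b' k - a' k + (((u k + al k) mod p) * ((v k + be k) mod p)) mod p) mod p"
      by (simp only: mod_add_right_eq)
    also have "\<dots> = (b' k - a' k + ((u k + al k) * (v k + be k)) mod p) mod p"
      by (simp only: mod_mult_eq)
    also have "\<dots> = (b' k - a' k + (u k + al k) * (v k + be k)) mod p"
      by (simp only: mod_add_right_eq)
    finally show "[(b' k - a' k + ((u k + al k) mod p) * ((v k + be k) mod p)) mod p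
       = b' k - a' k + (u k + al k) * (v k + be k)] (mod p)" by (simp add: Cong.cong_def)
  qed
  have ex: "(\<Sum>k\<in>I. a0 k) - (\<Sum>k\<in>I. b0 k) + (\<Sum>k\<in>I. J0 k) = (\<Sum>k\<in>I. u k * v k)"
  proof -
    have "(\<Sum>k\<in>I. a0 k) - (\<Sum>k\<in>I. b0 k) + (\<Sum>k\<in>I. J0 k) = (\<Sum>k\<in>I. a0 k - b0 k + J0 k)"
      by (simp add: sum_subtractf sum.distrib)
    also have "\<dots> = (\<Sum>k\<in>I. u k * v k)"
      by (rule sum.cong[OF refl]) (simp add: a0_def b0_def J0_def algebra_simps)
    finally show ?thesis .
  qed
  have i2: "[u 0 + (\<Sum>k\<in>I. u k * v k) = x y] (mod p)"
    using interp unfolding u_def v_def I_def .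
  have c3: "[bob_output p N c x y al be ga a' b' = x y - (\<Sum>k\<in>I. jj k) - c] (mod p)"
  proof -
    have "(\<Sum>k\<in>I. a0 k) + u 0 - (\<Sum>k\<in>I. b0 k) - c = (u 0 + (\<Sum>k\<in>I. u k * v k)) - (\<Sum>k\<in>I. J0 k) - c"
      using ex by simp
    moreover have "[(u 0 + (\<Sum>k\<in>I. u k * v k)) - (\<Sum>k\<in>I. J0 k) - c = x y - (\<Sum>k\<in>I. jj k) - c] (mod p)"
      by (intro cong_diff i2 cong_refl cong_sym[OF c2])
    ultimately show ?thesis using c1 cong_trans by metis
  qed
  have r1: "bob_output p N c x y al be ga a' b' \<in> zp p"
    unfolding bob_output_def Let_def zp_def using p1 by simp
  have "bob_output p N c x y al be ga a' b' = x y \<longleftrightarrow> [bob_output p N c x y al be ga a' b' = x y] (mod p)"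
    using r1 xy by (auto simp: Cong.cong_def zp_def)
  also have "\<dots> \<longleftrightarrow> [x y - (\<Sum>k\<in>I. jj k) - c = x y] (mod p)"
    using c3 by (meson cong_sym cong_trans)
  also have "\<dots> \<longleftrightarrow> (\<Sum>k\<in>I. jj k) mod p = (- c) mod p"
  proof -
    have "x y - (\<Sum>k\<in>I. jj k) - c - x y = - ((\<Sum>k\<in>I. jj k) - (- c))" by simp
    thus ?thesis by (simp only: cong_iff_dvd_diff mod_eq_dvd_iff dvd_minus_iff)
  qed
  finally show ?thesis unfolding jj_def I_def u_def v_def .
qed

lemma swap4:
  "(\<Sum>a\<in>A. \<Sum>b\<in>B. \<Sum>c\<in>C. \<Sum>d\<in>D. \<Sum>j\<in>S. f a b c d j) =
   (\<Sum>j\<in>S. \<Sum>a\<in>A. \<Sum>b\<in>B. \<Sum>c\<in>C. \<Sum>d\<in>D. f a b c d j)"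
proof -
  have "(\<Sum>a\<in>A. \<Sum>b\<in>B. \<Sum>c\<in>C. \<Sum>d\<in>D. \<Sum>j\<in>S. f a b c d j) =
        (\<Sum>a\<in>A. \<Sum>b\<in>B. \<Sum>c\<in>C. \<Sum>j\<in>S. \<Sum>d\<in>D. f a b c d j)"
    by (simp only: sum.swap[of _ D S])
  also have "\<dots> = (\<Sum>a\<in>A. \<Sum>b\<in>B. \<Sum>j\<in>S. \<Sum>c\<in>C. \<Sum>d\<in>D. f a b c d j)"
    by (simp only: sum.swap[of _ C S])
  also have "\<dots> = (\<Sum>a\<in>A. \<Sum>j\<in>S. \<Sum>b\<in>B. \<Sum>c\<in>C. \<Sum>d\<in>D. f a b c d j)"
    by (simp only: sum.swap[of _ B S])
  also have "\<dots> = (\<Sum>j\<in>S. \<Sum>a\<in>A. \<Sum>b\<in>B. \<Sum>c\<in>C. \<Sum>d\<in>D. f a b c d j)"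
    by (simp only: sum.swap[of _ A S])
  finally show ?thesis .
qed


lemma success_eq:
  fixes p :: int
  assumes p1: "p > 1" and N1: "1 \<le> N"
    and interp: "[Fcoef p N x 0 + (\<Sum>k\<in>{1..<N}. Fcoef p N x k * ((int y)^k mod p)) = x y] (mod p)"
    and xy: "x y \<in> zp p"
  shows "success_prob p N c P x y = chi p (mu p P) (N - 1) c"
proof -
  define I where "I = {1..<N}"
  define Z where "Z = zp p"
  define R where "R = PiE I (\<lambda>_. Z)"
  define C :: real where "C = (1 / (real_of_int p) ^ 3) ^ (N - 1)"
  define Xf where "Xf al k = (Fcoef p N x k + al k) mod p" for al :: "nat \<Rightarrow> int" and k
  define Yf where "Yf be k = ((int y)^k mod p + be k) mod p" for be :: "nat \<Rightarrow> int" and k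
  define jj where "jj al be a' b' k = (b' k - a' k + Xf al k * Yf be k) mod p"
    for al be a' b' :: "nat \<Rightarrow> int" and k
  define Fp where "Fp al be a' b' = (\<Prod>k\<in>I. P (a' k) (b' k) (Xf al k) (Yf be k))"
    for al be a' b' :: "nat \<Rightarrow> int"
  define ind :: "(nat \<Rightarrow> int) \<Rightarrow> (nat \<Rightarrow> int) \<Rightarrow> (nat \<Rightarrow> int) \<Rightarrow> (nat \<Rightarrow> int) \<Rightarrow> real"
    where "ind al be a' b' = (if (\<Sum>k\<in>I. jj al be a' b' k) mod p = (- c) mod p then 1 else 0)"
    for al be a' b'
  define S where "S = {J\<in>R. (\<Sum>k\<in>I. J k) mod p = (- c) mod p}"
  have p0: "p > 0" using p1 by simp
  have fZ: "finite Z" by (simp add: Z_def zp_def)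
  have fI: "finite I" by (simp add: I_def)
  have fR: "finite R" unfolding R_def using fZ fI by (simp add: finite_PiE)
  have cardR: "real (card R) = (real_of_int p) ^ (N - 1)"
  proof -
    have "card R = nat p ^ (N - 1)" unfolding R_def using fI
      by (simp add: card_PiE Z_def zp_def I_def)
    thus ?thesis using p0 by simp
  qed
  have step1: "success_prob p N c P x y =
     (\<Sum>al\<in>R. \<Sum>be\<in>R. \<Sum>ga\<in>R. \<Sum>a'\<in>R. \<Sum>b'\<in>R. C * Fp al be a' b' * ind al be a' b')"
    unfolding success_prob_def Let_def Fp_def ind_def C_def R_def Z_def I_def jj_def Xf_def Yf_def
    by (simp only: bob_cond[OF p1 interp xy])
  also have "\<dots> = (\<Sum>al\<in>R. \<Sum>be\<in>R. (real_of_int p) ^ (N - 1) *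
        (\<Sum>a'\<in>R. \<Sum>b'\<in>R. C * Fp al be a' b' * ind al be a' b'))"
    by (simp only: sum_constant cardR)
  finally have step2: "success_prob p N c P x y = \<dots>" .
  have indS: "ind al be a' b' = (\<Sum>J\<in>S. \<Prod>k\<in>I. (if jj al be a' b' k = J k then 1 else 0))"
    for al be a' b'
  proof -
    define r where "r = restrict (jj al be a' b') I"
    have rR: "r \<in> R" unfolding r_def R_def Z_def jj_def using p0 by (auto simp: zp_def)
    have pr: "(\<Prod>k\<in>I. (if jj al be a' b' k = J k then 1 else 0 :: real)) = (if J = r then 1 else 0)"
      if J: "J \<in> R" for J
    proof (cases "J = r")
      case True thus ?thesis by (simp add: r_def)
    next
      case False
      then obtain k where k: "k \<in> I" "J k \<noteq> r k"
        using J rR unfolding R_def by (metis PiE_ext)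
      hence "jj al be a' b' k \<noteq> J k" by (simp add: r_def)
      hence "(\<Prod>k\<in>I. (if jj al be a' b' k = J k then 1 else 0 :: real)) = 0"
        using k fI by (intro prod_zero) auto
      thus ?thesis using False by simp
    qed
    have "(\<Sum>J\<in>S. \<Prod>k\<in>I. (if jj al be a' b' k = J k then 1 else 0 :: real)) = (\<Sum>J\<in>S. if J = r then 1 else 0)"
      by (rule sum.cong[OF refl]) (use pr in \<open>auto simp: S_def\<close>)
    also have "\<dots> = (if r \<in> S then 1 else 0)"
      using fR by (simp add: sum.delta' S_def)
    also have "r \<in> S \<longleftrightarrow> (\<Sum>k\<in>I. jj al be a' b' k) mod p = (- c) mod p"
    proof -
      have "(\<Sum>k\<in>I. r k) = (\<Sum>k\<in>I. jj al be a' b' k)" by (simp add: r_def)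
      thus ?thesis using rR by (simp add: S_def)
    qed
    finally show ?thesis by (simp add: ind_def)
  qed
  define H where "H J k \<alpha> \<beta> s t = P s t ((Fcoef p N x k + \<alpha>) mod p) (((int y)^k mod p + \<beta>) mod p) *
     (if (t - s + ((Fcoef p N x k + \<alpha>) mod p) * (((int y)^k mod p + \<beta>) mod p)) mod p = J k then 1 else 0)"
    for J :: "nat \<Rightarrow> int" and k \<alpha> \<beta> s t
  have FpInd: "Fp al be a' b' * ind al be a' b' =
      (\<Sum>J\<in>S. \<Prod>k\<in>I. H J k (al k) (be k) (a' k) (b' k))" for al be a' b'
    unfolding indS Fp_def sum_distrib_left H_def jj_def Xf_def Yf_def
    by (simp add: prod.distrib[symmetric])
  have inner: "(\<Sum>al\<in>R. \<Sum>be\<in>R. \<Sum>a'\<in>R. \<Sum>b'\<in>R. \<Prod>k\<in>I. H J k (al k) (be k) (a' k) (b' k))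
      = ((real_of_int p)^2) ^ (N - 1) * (\<Prod>k\<in>I. mu p P (J k))" if J: "J \<in> S" for J
  proof -
    have "(\<Sum>al\<in>R. \<Sum>be\<in>R. \<Sum>a'\<in>R. \<Sum>b'\<in>R. \<Prod>k\<in>I. H J k (al k) (be k) (a' k) (b' k))
        = (\<Prod>k\<in>I. \<Sum>\<alpha>\<in>Z. \<Sum>\<beta>\<in>Z. \<Sum>s\<in>Z. \<Sum>t\<in>Z. H J k \<alpha> \<beta> s t)"
      unfolding R_def by (rule sum4_PiE[OF fI fZ])
    also have "\<dots> = (\<Prod>k\<in>I. (real_of_int p)^2 * mu p P (J k))"
    proof (rule prod.cong[OF refl])
      fix k assume k: "k \<in> I"
      have "J k \<in> zp p" using J k by (auto simp: S_def R_def Z_def)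
      thus "(\<Sum>\<alpha>\<in>Z. \<Sum>\<beta>\<in>Z. \<Sum>s\<in>Z. \<Sum>t\<in>Z. H J k \<alpha> \<beta> s t) = (real_of_int p)^2 * mu p P (J k)"
        unfolding H_def Z_def by (rule coord[OF p0])
    qed
    also have "\<dots> = ((real_of_int p)^2) ^ (N - 1) * (\<Prod>k\<in>I. mu p P (J k))"
      by (simp add: prod.distrib I_def)
    finally show ?thesis .
  qed
  have "success_prob p N c P x y = (real_of_int p) ^ (N - 1) * C *
      (\<Sum>al\<in>R. \<Sum>be\<in>R. \<Sum>a'\<in>R. \<Sum>b'\<in>R. \<Sum>J\<in>S. \<Prod>k\<in>I. H J k (al k) (be k) (a' k) (b' k))"
  proof -
    have eq: "\<And>al be a' b'. C * Fp al be a' b' * ind al be a' b' =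
       C * (\<Sum>J\<in>S. \<Prod>k\<in>I. H J k (al k) (be k) (a' k) (b' k))"
      by (simp only: mult.assoc FpInd)
    show ?thesis unfolding step2 eq by (simp only: sum_distrib_left[symmetric] mult.assoc)
  qed
  also have "\<dots> = (real_of_int p) ^ (N - 1) * C *
      (\<Sum>J\<in>S. \<Sum>al\<in>R. \<Sum>be\<in>R. \<Sum>a'\<in>R. \<Sum>b'\<in>R. \<Prod>k\<in>I. H J k (al k) (be k) (a' k) (b' k))"
    by (simp only: swap4[where A=R and B=R and C=R and D=R and S=S])
  also have "\<dots> = (real_of_int p) ^ (N - 1) * C *
      (\<Sum>J\<in>S. ((real_of_int p)^2) ^ (N - 1) * (\<Prod>k\<in>I. mu p P (J k)))"
    by (intro arg_cong[where f="\<lambda>z. (real_of_int p) ^ (N - 1) * C * z"] sum.cong refl inner)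
  also have "\<dots> = (\<Sum>J\<in>S. \<Prod>k\<in>I. mu p P (J k))"
  proof -
    have "(real_of_int p) ^ (N - 1) * C * ((real_of_int p)^2) ^ (N - 1) = 1"
    proof -
      have "real_of_int p * (real_of_int p)^2 = (real_of_int p)^3" by (simp add: power2_eq_square power3_eq_cube)
      thus ?thesis unfolding C_def using p0 by (simp add: power_mult_distrib[symmetric] power_divide)
    qed
    hence "\<And>J. (real_of_int p) ^ (N - 1) * C * (((real_of_int p)^2) ^ (N - 1) * (\<Prod>k\<in>I. mu p P (J k)))
        = (\<Prod>k\<in>I. mu p P (J k))" by (metis mult.assoc mult_1)
    thus ?thesis by (simp only: sum_distrib_left)
  qed
  also have "\<dots> = chi p (mu p P) (N - 1) c"
  proof -
    have "{1..N - 1} = I" using N1 by (auto simp: I_def)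
    thus ?thesis unfolding chi_def S_def R_def Z_def by simp
  qed
  finally show ?thesis .
qed

theorem mainTheorem6:
  fixes p :: int and N :: nat and c :: int
    and P :: "int \<Rightarrow> int \<Rightarrow> int \<Rightarrow> int \<Rightarrow> real"
    and x :: "nat \<Rightarrow> int" and y :: nat
  assumes "prime p" and "1 \<le> N" and "int N \<le> p"
    and "is_box p P"
    and "c \<in> zp p"
    and "\<forall>i<N. x i \<in> zp p"
    and "y < N"
  shows "success_prob p N c P x y = chi p (mu p P) (N - 1) c
       \<and> complex_of_real (chi p (mu p P) (N - 1) c) =
           1 / of_int p * (\<Sum>k\<in>zp p. omega p ^ nat (c * k) *
              (\<Sum>j\<in>zp p. complex_of_real (mu p P j) * omega p ^ nat (j * k)) ^ (N - 1))"
proof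
  have p1: "p > 1" using assms(1) prime_gt_1_int by blast
  have xy: "x y \<in> zp p" using assms(6,7) by blast
  have i: "(Fcoef p N x 0 + (\<Sum>k\<in>{1..<N}. Fcoef p N x k * ((int y)^k mod p))) mod p = x y"
    by (rule interp[OF assms(1,2,3,7,6)])
  hence i2: "[Fcoef p N x 0 + (\<Sum>k\<in>{1..<N}. Fcoef p N x k * ((int y)^k mod p)) = x y] (mod p)"
    using xy by (simp add: Cong.cong_def zp_def)
  show "success_prob p N c P x y = chi p (mu p P) (N - 1) c"
    by (rule success_eq[OF p1 assms(2) i2 xy])
  show "complex_of_real (chi p (mu p P) (N - 1) c) =
           1 / of_int p * (\<Sum>k\<in>zp p. omega p ^ nat (c * k) *
              (\<Sum>j\<in>zp p. complex_of_real (mu p P j) * omega p ^ nat (j * k)) ^ (N - 1))"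
    using p1 by (intro chi_fourier assms(5)) simp
qed

end
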